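(* Consider $n$ agents indexed by $\mathcal{V}=\{1,\dots,n\}$ communicating over a fixed directed graph $\mathcal{G}(\mathcal{A})$ with nonnegative weight matrix $\mathcal{A}=(a_{ij})_{n\times n}$, where $a_{ij}>0$ if and only if agent $i$ receives information from agent $j$ (i.e. $j\in N_i$, the neighbor set of $i$). Suppose $\mathcal{G}(\mathcal{A})$ is strongly connected. Let each agent have state $x_i(t)\in\mathbb{R}^m$ evolving according to $$\dot x_i(t)=\sum_{j\in N_i} a_{ij}\big(x_j(t)-x_i(t)\big)+\phi_i(t),\qquad \phi_i(t)=-\tau\Big(\big[x_i(t)-P_{X_i}(x_i(t))\big]+\nabla g_i^+(x_i(t))\Big),\quad i\in\mathcal{V},$$ with $\tau>0$. Then the agents reach consensus asymptotically, i.e. $\lim_{t\to\infty}\|x_i(t)-x_j(t)\|=0$ for all $i,j$, and there is a point $x^*\in\mathbf{X}^*$ such that $\lim_{t\to\infty}x_i(t)=x^*$ for every $i\in\mathcal{V}$.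
   Context: For each $i\in\mathcal{V}$, $g_i:\mathbb{R}^m\to\mathbb{R}$ is a convex function, continuous on $\mathbb{R}^m$, and $X_i\subset\mathbb{R}^m$ is a closed convex set; $X=\bigcap_{i=1}^n X_i$. The convex feasibility problem (CFP) is: find $x\in\mathbb{R}^m$ with $g_i(x)\le 0$ for all $i=1,\dots,n$ and $x\in X$. Its solution set $\mathbf{X}^*$ is assumed non-empty. $g_i^+(x)=\max[g_i(x),0]$. $P_{X_i}(x)$ denotes the Euclidean projection of $x$ onto $X_i$. $\nabla g_i^+(x)$ denotes a subgradient of the convex function $g_i^+$ at $x$ (a vector $v$ with $\langle v,y-x\rangle\le g_i^+(y)-g_i^+(x)$ for all $y$), chosen as $\nabla g_i^+(x)=0$ if $g_i(x)\le 0$ and $\nabla g_i^+(x)=\nabla g_i(x)$ (a subgradient of $g_i$ at $x$) otherwise; each map $x\mapsto\nabla g_i^+(x)$ is assumed piecewise continuous. A directed graph is strongly connected if there is a directed path between any two nodes. *)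

theory Defs
  imports "HOL-Analysis.Analysis"
begin

definition is_subgradient :: "('a::real_inner \<Rightarrow> real) \<Rightarrow> 'a \<Rightarrow> 'a \<Rightarrow> bool" where
  "is_subgradient f x v \<longleftrightarrow> (\<forall>y. inner v (y - x) \<le> f y - f x)"

definition pos_part_fun :: "('a \<Rightarrow> real) \<Rightarrow> 'a \<Rightarrow> real" where
  "pos_part_fun g x = max (g x) 0"

definition piecewise_continuous :: "('a::topological_space \<Rightarrow> 'b::topological_space) \<Rightarrow> bool" where
  "piecewise_continuous f \<longleftrightarrow>
     (\<exists>\<F>. finite \<F> \<and> \<Union>\<F> = UNIV \<and> (\<forall>S\<in>\<F>. continuous_on S f))"

definition neighbors :: "('n \<Rightarrow> 'n \<Rightarrow> real) \<Rightarrow> 'n \<Rightarrow> 'n set" where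
  "neighbors A i = {j. A i j > 0}"

definition strongly_connected :: "('n \<Rightarrow> 'n \<Rightarrow> real) \<Rightarrow> bool" where
  "strongly_connected A \<longleftrightarrow> (\<forall>i j. (i, j) \<in> {(i, j). A i j > 0}\<^sup>*)"

definition cfp_solutions :: "('n \<Rightarrow> 'a \<Rightarrow> real) \<Rightarrow> ('n \<Rightarrow> 'a set) \<Rightarrow> 'a set" where
  "cfp_solutions g X = {z. (\<forall>i. g i z \<le> 0) \<and> z \<in> (\<Inter>i. X i)}"

end

theory Submission
  imports Defs
begin


lemma sc_propagate:
  assumes "strongly_connected A" "\<And>i j. A i j > 0 \<Longrightarrow> Q j \<Longrightarrow> Q i" "Q j"
  shows "Q i"
proof -
  have "(i, j) \<in> {(i, j). A i j > 0}\<^sup>*" using assms(1) unfolding strongly_connected_def by blast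
  then show ?thesis
  proof (induction rule: converse_rtrancl_induct)
    case base then show ?case using assms(3) .
  next
    case (step a b) then show ?case using assms(2) by auto
  qed
qed

lemma balance_vector:
  fixes A :: "'n::finite \<Rightarrow> 'n \<Rightarrow> real"
  assumes nn: "\<And>i j. A i j \<ge> 0" and sc: "strongly_connected A"
  shows "\<exists>w. (\<forall>i. w i > 0) \<and> (\<forall>j. (\<Sum>i\<in>UNIV. w i * A i j) = w j * (\<Sum>k\<in>UNIV. A j k))"
proof -
  define d where "d j = (\<Sum>k\<in>UNIV. A j k)" for j
  define D where "D = (\<Sum>j\<in>UNIV. d j)"
  define \<delta> where "\<delta> = 1 / (1 + D)"
  have d0: "d j \<ge> 0" for j unfolding d_def by (simp add: nn sum_nonneg)
  have dD: "d j \<le> D" for j unfolding D_def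
    by (rule member_le_sum) (auto simp: d0)
  have D0: "D \<ge> 0" using d0 dD order_trans by blast
  have \<delta>0: "\<delta> > 0" unfolding \<delta>_def using D0 by simp
  have \<delta>d: "\<delta> * d j \<le> 1" for j
    unfolding \<delta>_def using dD[of j] D0 by (simp add: field_simps)
  define S :: "(real^'n) set" where "S = {w. (\<forall>i. 0 \<le> w$i) \<and> (\<Sum>i\<in>UNIV. w$i) = 1}"
  define T :: "real^'n \<Rightarrow> real^'n" where
    "T w = (\<chi> j. \<delta> * (\<Sum>i\<in>UNIV. w$i * A i j) + (1 - \<delta> * d j) * w$j)" for w
  have bS: "bounded S"
  proof -
    have "norm w \<le> 1" if "w \<in> S" for w
    proof -
      have "norm w \<le> (\<Sum>i\<in>UNIV. \<bar>w$i\<bar>)" by (rule norm_le_l1_cart)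
      also have "\<dots> = 1" using that unfolding S_def by simp
      finally show ?thesis .
    qed
    then show ?thesis unfolding bounded_iff by blast
  qed
  have cS: "closed S"
  proof -
    have "S = (\<Inter>i. {w. 0 \<le> w$i}) \<inter> {w. (\<Sum>i\<in>UNIV. w$i) = 1}" unfolding S_def by auto
    moreover have "closed {w::real^'n. 0 \<le> w$i}" for i
      by (intro closed_Collect_le continuous_intros)
    moreover have "closed {w::real^'n. (\<Sum>i\<in>UNIV. w$i) = 1}"
      by (intro closed_Collect_eq continuous_intros)
    ultimately show ?thesis by auto
  qed
  have cvS: "convex S"
    unfolding S_def convex_def
    by (auto simp: sum.distrib sum_distrib_left[symmetric])
  have neS: "S \<noteq> {}"
  proof -
    have "(\<chi> i. 1 / real CARD('n)) \<in> S" unfolding S_def by simp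
    then show ?thesis by blast
  qed
  have contT: "continuous_on S T" unfolding T_def
    by (intro continuous_intros)
  have TS: "T \<in> S \<rightarrow> S"
  proof
    fix w assume w: "w \<in> S"
    have "0 \<le> T w $ j" for j
    proof -
      have "0 \<le> \<delta> * (\<Sum>i\<in>UNIV. w$i * A i j)" using w \<delta>0 nn unfolding S_def
        by (intro mult_nonneg_nonneg sum_nonneg) auto
      moreover have "0 \<le> (1 - \<delta> * d j) * w$j" using w \<delta>d[of j] unfolding S_def by auto
      ultimately show ?thesis unfolding T_def by simp
    qed
    moreover have "(\<Sum>j\<in>UNIV. T w $ j) = 1"
    proof -
      have "(\<Sum>j\<in>UNIV. T w $ j) = \<delta> * (\<Sum>j\<in>UNIV. \<Sum>i\<in>UNIV. w$i * A i j)
           + (\<Sum>j\<in>UNIV. w$j) - \<delta> * (\<Sum>j\<in>UNIV. d j * w$j)"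
        unfolding T_def by (simp add: sum.distrib sum_distrib_left algebra_simps sum_subtractf)
      also have "(\<Sum>j\<in>UNIV. \<Sum>i\<in>UNIV. w$i * A i j) = (\<Sum>j\<in>UNIV. d j * w$j)"
        unfolding d_def by (subst sum.swap) (simp add: sum_distrib_left sum_distrib_right mult.commute)
      finally show ?thesis using w unfolding S_def by simp
    qed
    ultimately show "T w \<in> S" unfolding S_def by blast
  qed
  obtain w where wS: "w \<in> S" and fx: "T w = w"
    using brouwer[OF compact_eq_bounded_closed[THEN iffD2, OF conjI[OF bS cS]] cvS neS contT TS] by blast
  have bal: "(\<Sum>i\<in>UNIV. w$i * A i j) = w$j * d j" for j
  proof -
    have "T w $ j = w $ j" using fx by simp
    then have "\<delta> * (\<Sum>i\<in>UNIV. w$i * A i j) = \<delta> * (w$j * d j)" unfolding T_def by (simp add: algebra_simps)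
    then show ?thesis using \<delta>0 by simp
  qed
  have wnn: "0 \<le> w$i" for i using wS unfolding S_def by auto
  have pos: "w$i > 0" for i
  proof (rule ccontr)
    assume "\<not> w$i > 0"
    then have z: "w$i = 0" using wnn[of i] by simp
    have "w$k = 0" for k
    proof (rule sc_propagate[OF sc, where Q="\<lambda>k. w$k = 0" and j=i])
      fix a b assume ab: "A a b > 0" "w$b = 0"
      have "(\<Sum>i\<in>UNIV. w$i * A i b) = 0" using bal[of b] ab(2) by simp
      moreover have "\<forall>i\<in>UNIV. 0 \<le> w$i * A i b" using wnn nn by simp
      ultimately have "w$a * A a b = 0" using sum_nonneg_eq_0_iff[of UNIV "\<lambda>i. w$i * A i b"] by simp
      then show "w$a = 0" using ab(1) by simp
    qed (use z in auto)
    then have "(\<Sum>i\<in>UNIV. w$i) = 0" by simp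
    then show False using wS unfolding S_def by simp
  qed
  show ?thesis
    by (rule exI[of _ "\<lambda>i. w$i"]) (use pos bal d_def in auto)
qed



lemma key_ineq:
  fixes u z :: "'a::euclidean_space"
  assumes cv: "convex S" and cl: "closed S" and zS: "z \<in> S"
    and sg: "is_subgradient (pos_part_fun h) u v" and hz: "h z \<le> 0"
  shows "inner ((u - closest_point S u) + v) (u - z)
         \<ge> (norm (u - closest_point S u))\<^sup>2 + pos_part_fun h u"
proof -
  define p where "p = closest_point S u"
  have ne: "S \<noteq> {}" using zS by auto
  have pS: "p \<in> S" and pmin: "\<forall>y\<in>S. dist u p \<le> dist u y"
    using closest_point_exists[OF cl ne] unfolding p_def by auto
  have d: "inner (u - p) (z - p) \<le> 0"
    by (rule any_closest_point_dot[OF cv cl pS zS pmin])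
  have e: "inner (u - p) (u - z) = (norm (u - p))\<^sup>2 - inner (u - p) (z - p)"
    by (simp add: power2_norm_eq_inner inner_diff_right)
  have f: "inner v (z - u) \<le> pos_part_fun h z - pos_part_fun h u"
    using sg unfolding is_subgradient_def by blast
  have hz0: "pos_part_fun h z = 0" using hz unfolding pos_part_fun_def by simp
  have g: "inner v (u - z) = - inner v (z - u)"
    by (simp add: inner_diff_right)
  show ?thesis unfolding p_def[symmetric] using d e f hz0 g
    by (simp add: inner_add_left)
qed

lemma consensus_identity:
  fixes y :: "'n::finite \<Rightarrow> 'a::real_inner"
  assumes bal: "\<And>j. (\<Sum>i\<in>UNIV. w i * A i j) = w j * (\<Sum>k\<in>UNIV. A j k)"
  shows "2 * (\<Sum>i\<in>UNIV. w i * (\<Sum>j\<in>UNIV. A i j * inner (y j - y i) (y i)))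
       = - (\<Sum>i\<in>UNIV. \<Sum>j\<in>UNIV. w i * A i j * (norm (y j - y i))\<^sup>2)"
proof -
  have pt: "2 * inner (y j - y i) (y i) = inner (y j) (y j) - inner (y i) (y i) - (norm (y j - y i))\<^sup>2" for i j
    by (simp add: power2_norm_eq_inner inner_diff_left inner_diff_right inner_commute)
  have "2 * (\<Sum>i\<in>UNIV. w i * (\<Sum>j\<in>UNIV. A i j * inner (y j - y i) (y i)))
      = (\<Sum>i\<in>UNIV. \<Sum>j\<in>UNIV. w i * A i j * (2 * inner (y j - y i) (y i)))"
    by (simp add: sum_distrib_left algebra_simps)
  also have "\<dots> = (\<Sum>i\<in>UNIV. \<Sum>j\<in>UNIV. w i * A i j * inner (y j) (y j))
       - (\<Sum>i\<in>UNIV. \<Sum>j\<in>UNIV. w i * A i j * inner (y i) (y i))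
       - (\<Sum>i\<in>UNIV. \<Sum>j\<in>UNIV. w i * A i j * (norm (y j - y i))\<^sup>2)"
  proof -
    have "(\<Sum>i\<in>UNIV. \<Sum>j\<in>UNIV. w i * A i j * (2 * inner (y j - y i) (y i)))
      = (\<Sum>i\<in>UNIV. \<Sum>j\<in>UNIV. w i * A i j * inner (y j) (y j) - w i * A i j * inner (y i) (y i)
           - w i * A i j * (norm (y j - y i))\<^sup>2)"
      unfolding pt by (simp add: right_diff_distrib)
    then show ?thesis by (simp add: sum_subtractf)
  qed
  also have "(\<Sum>i\<in>UNIV. \<Sum>j\<in>UNIV. w i * A i j * inner (y j) (y j))
      = (\<Sum>i\<in>UNIV. \<Sum>j\<in>UNIV. w i * A i j * inner (y i) (y i))"
  proof -
    have "(\<Sum>i\<in>UNIV. \<Sum>j\<in>UNIV. w i * A i j * inner (y j) (y j))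
        = (\<Sum>j\<in>UNIV. (\<Sum>i\<in>UNIV. w i * A i j) * inner (y j) (y j))"
      by (subst sum.swap) (simp add: sum_distrib_right)
    also have "\<dots> = (\<Sum>j\<in>UNIV. w j * (\<Sum>k\<in>UNIV. A j k) * inner (y j) (y j))"
      by (simp add: bal)
    also have "\<dots> = (\<Sum>i\<in>UNIV. \<Sum>j\<in>UNIV. w i * A i j * inner (y i) (y i))"
      by (simp add: sum_distrib_left sum_distrib_right algebra_simps)
    finally show ?thesis .
  qed
  finally show ?thesis by simp
qed

lemma deriv_bound:
  fixes V :: "real \<Rightarrow> real"
  assumes der: "\<And>t. t \<ge> a \<Longrightarrow> (V has_real_derivative D t) (at t within {a..})"
    and le: "\<And>t. t \<ge> a \<Longrightarrow> D t \<le> c" and ab: "a \<le> b"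
  shows "V b \<le> V a + c * (b - a)"
proof -
  have "\<exists>x\<in>{a..b}. V b - V a = (*) (D x) (b - a)"
  proof (rule mvt_very_simple[OF ab])
    fix x assume "a \<le> x" "x \<le> b"
    then have "(V has_real_derivative D x) (at x within {a..b})"
      using DERIV_subset[OF der[of x]] by auto
    then show "(V has_derivative (*) (D x)) (at x within {a..b})"
      by (simp add: has_field_derivative_def)
  qed
  then obtain x where x: "x \<in> {a..b}" "V b - V a = D x * (b - a)" by auto
  have "D x * (b - a) \<le> c * (b - a)" using le[of x] x(1) ab by (intro mult_right_mono) auto
  then show ?thesis using x by (simp add: algebra_simps)
qed


theorem theorem3:
  fixes A :: "'n::finite \<Rightarrow> 'n \<Rightarrow> real"
    and g :: "'n \<Rightarrow> 'a::euclidean_space \<Rightarrow> real"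
    and X :: "'n \<Rightarrow> 'a set"
    and dg :: "'n \<Rightarrow> 'a \<Rightarrow> 'a"
    and x :: "'n \<Rightarrow> real \<Rightarrow> 'a"
    and \<tau> :: real
  assumes A_nonneg: "\<And>i j. A i j \<ge> 0"
    and strong: "strongly_connected A"
    and g_convex: "\<And>i. convex_on UNIV (g i)"
    and g_cont: "\<And>i. continuous_on UNIV (g i)"
    and X_closed: "\<And>i. closed (X i)"
    and X_convex: "\<And>i. convex (X i)"
    and sol_nonempty: "cfp_solutions g X \<noteq> {}"
    and dg_zero: "\<And>i z. g i z \<le> 0 \<Longrightarrow> dg i z = 0"
    and dg_sub: "\<And>i z. g i z > 0 \<Longrightarrow> is_subgradient (g i) z (dg i z)"
    and dg_subplus: "\<And>i z. is_subgradient (pos_part_fun (g i)) z (dg i z)"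
    and dg_pw: "\<And>i. piecewise_continuous (dg i)"
    and tau_pos: "\<tau> > 0"
    and ode: "\<And>i t. t \<ge> 0 \<Longrightarrow>
      (x i has_vector_derivative
         ((\<Sum>j\<in>neighbors A i. A i j *\<^sub>R (x j t - x i t))
          - \<tau> *\<^sub>R ((x i t - closest_point (X i) (x i t)) + dg i (x i t))))
      (at t within {0..})"
  shows "(\<forall>i j. ((\<lambda>t. norm (x i t - x j t)) \<longlongrightarrow> 0) at_top) \<and>
         (\<exists>xs\<in>cfp_solutions g X. \<forall>i. (x i \<longlongrightarrow> xs) at_top)"

proof -
  obtain w where wpos: "\<And>i. w i > 0"
    and bal: "\<And>j. (\<Sum>i\<in>UNIV. w i * A i j) = w j * (\<Sum>k\<in>UNIV. A j k)"
    using balance_vector[OF A_nonneg strong] by blast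
  obtain z0 where z0: "z0 \<in> cfp_solutions g X" using sol_nonempty by blast
  have Xne: "X i \<noteq> {}" for i using z0 unfolding cfp_solutions_def by auto
  define f where "f i u = (norm (u - closest_point (X i) u))\<^sup>2 + pos_part_fun (g i) u" for i u
  define Dx where "Dx i t = (\<Sum>j\<in>neighbors A i. A i j *\<^sub>R (x j t - x i t))
          - \<tau> *\<^sub>R ((x i t - closest_point (X i) (x i t)) + dg i (x i t))" for i t
  define V where "V z t = (\<Sum>i\<in>UNIV. w i * inner (x i t - z) (x i t - z))" for z t
  define Vd where "Vd z t = (\<Sum>i\<in>UNIV. w i * (2 * inner (Dx i t) (x i t - z)))" for z t
  define h where "h t = (\<Sum>i\<in>UNIV. \<Sum>j\<in>UNIV. w i * A i j * (norm (x j t - x i t))\<^sup>2)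
      + 2 * \<tau> * (\<Sum>i\<in>UNIV. w i * f i (x i t))" for t
  have f0: "f i u \<ge> 0" for i u unfolding f_def pos_part_fun_def by simp
  have h0: "h t \<ge> 0" for t unfolding h_def using wpos A_nonneg f0 tau_pos
    by (intro add_nonneg_nonneg mult_nonneg_nonneg sum_nonneg) (auto intro: less_imp_le)
  have V0: "V z t \<ge> 0" for z t unfolding V_def using wpos
    by (intro sum_nonneg mult_nonneg_nonneg) (auto intro: less_imp_le)
  have Vterm: "w i * (norm (x i t - z))\<^sup>2 \<le> V z t" for i z t
  proof -
    have "w i * inner (x i t - z) (x i t - z) \<le> V z t" unfolding V_def
      by (rule member_le_sum[where f="\<lambda>i. w i * inner (x i t - z) (x i t - z)"])
         (simp_all add: less_imp_le[OF wpos])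
    then show ?thesis by (simp add: power2_norm_eq_inner)
  qed
  have vder: "(V z has_real_derivative Vd z t) (at t within {0..})" if t: "t \<ge> 0" for z t
  proof -
    have one: "((\<lambda>t. inner (x i t - z) (x i t - z)) has_real_derivative 2 * inner (Dx i t) (x i t - z))
                 (at t within {0..})" for i
    proof -
      have d: "((\<lambda>t. x i t - z) has_derivative (\<lambda>s. s *\<^sub>R Dx i t)) (at t within {0..})"
        using ode[OF t, of i] unfolding Dx_def has_vector_derivative_def
        by (auto intro!: derivative_eq_intros)
      have "((\<lambda>t. inner (x i t - z) (x i t - z)) has_derivative
          (\<lambda>s. inner (x i t - z) (s *\<^sub>R Dx i t) + inner (s *\<^sub>R Dx i t) (x i t - z))) (at t within {0..})"
        by (rule has_derivative_inner[OF d d])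
      then show ?thesis unfolding has_field_derivative_def
        by (rule has_derivative_eq_rhs) (auto simp: inner_commute algebra_simps)
    qed
    show ?thesis unfolding V_def Vd_def
      by (intro DERIV_sum DERIV_cmult one)
  qed
  have vle: "Vd z t \<le> - h t" if z: "z \<in> cfp_solutions g X" for z t
  proof -
    define y where "y i = x i t - z" for i
    define v where "v i = (x i t - closest_point (X i) (x i t)) + dg i (x i t)" for i
    have nb: "(\<Sum>j\<in>neighbors A i. A i j *\<^sub>R (x j t - x i t)) = (\<Sum>j\<in>UNIV. A i j *\<^sub>R (x j t - x i t))" for i
    proof (rule sum.mono_neutral_left)
      show "\<forall>j\<in>UNIV - neighbors A i. A i j *\<^sub>R (x j t - x i t) = 0"
        using A_nonneg unfolding neighbors_def by (auto simp: not_less order.antisym)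
    qed auto
    have inn: "inner (Dx i t) (x i t - z) = (\<Sum>j\<in>UNIV. A i j * inner (y j - y i) (y i)) - \<tau> * inner (v i) (y i)" for i
      unfolding Dx_def nb y_def v_def by (simp add: inner_sum_left inner_diff_left)
    have fi: "inner (v i) (y i) \<ge> f i (x i t)" for i
    proof -
      have zi: "z \<in> X i" and gz: "g i z \<le> 0" using z unfolding cfp_solutions_def by auto
      show ?thesis unfolding v_def y_def f_def
        by (rule key_ineq[OF X_convex X_closed zi dg_subplus gz])
    qed
    have "Vd z t = 2 * (\<Sum>i\<in>UNIV. w i * (\<Sum>j\<in>UNIV. A i j * inner (y j - y i) (y i)))
        - 2 * \<tau> * (\<Sum>i\<in>UNIV. w i * inner (v i) (y i))"
      unfolding Vd_def inn by (simp add: sum_distrib_left sum_subtractf sum.distrib algebra_simps)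
    also have "2 * (\<Sum>i\<in>UNIV. w i * (\<Sum>j\<in>UNIV. A i j * inner (y j - y i) (y i)))
        = - (\<Sum>i\<in>UNIV. \<Sum>j\<in>UNIV. w i * A i j * (norm (x j t - x i t))\<^sup>2)"
      using consensus_identity[of w A y, OF bal] unfolding y_def by simp
    also have "2 * \<tau> * (\<Sum>i\<in>UNIV. w i * f i (x i t)) \<le> 2 * \<tau> * (\<Sum>i\<in>UNIV. w i * inner (v i) (y i))"
      using tau_pos wpos fi by (intro mult_left_mono sum_mono) (auto intro: less_imp_le)
    then have "- (\<Sum>i\<in>UNIV. \<Sum>j\<in>UNIV. w i * A i j * (norm (x j t - x i t))\<^sup>2)
        - 2 * \<tau> * (\<Sum>i\<in>UNIV. w i * inner (v i) (y i)) \<le> - h t"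
      unfolding h_def by simp
    finally show ?thesis .
  qed
  have vmono: "V z b \<le> V z a" if z: "z \<in> cfp_solutions g X" and a: "0 \<le> a" "a \<le> b" for z a b
  proof -
    have "V z b \<le> V z a + 0 * (b - a)"
    proof (rule deriv_bound[where D="Vd z"])
      fix t assume "a \<le> t"
      then show "(V z has_real_derivative Vd z t) (at t within {a..})"
        using DERIV_subset[OF vder[of t z]] a by auto
      show "Vd z t \<le> 0" using vle[OF z, of t] h0[of t] by simp
    qed (use a in auto)
    then show ?thesis by simp
  qed
  have hsmall: "\<exists>t\<ge>T. h t < e" if e: "e > 0" and T: "T \<ge> 0" for e T
  proof (rule ccontr)
    assume "\<not> ?thesis"
    then have he: "h t \<ge> e" if "t \<ge> T" for t using that by (simp add: not_less)
    define b where "b = T + V z0 T / e + 1"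
    have bT: "T \<le> b" unfolding b_def using V0[of z0 T] e by simp
    have "V z0 b \<le> V z0 T + (- e) * (b - T)"
    proof (rule deriv_bound[where D="Vd z0"])
      fix t assume "T \<le> t"
      then show "(V z0 has_real_derivative Vd z0 t) (at t within {T..})"
        using DERIV_subset[OF vder[of t z0]] T by auto
      show "Vd z0 t \<le> - e" using vle[OF z0, of t] he[OF \<open>T \<le> t\<close>] by simp
    qed (use bT in auto)
    also have "V z0 T + (- e) * (b - T) = - e" unfolding b_def using e by (simp add: field_simps)
    finally show False using V0[of z0 b] e by simp
  qed
  have "\<forall>k. \<exists>t. t \<ge> real k \<and> h t < inverse (real (Suc k))"
    using hsmall by (metis of_nat_0_le_iff inverse_positive_iff_positive of_nat_0_less_iff zero_less_Suc)
  then obtain tk where tk: "\<And>k. tk k \<ge> real k" "\<And>k. h (tk k) < inverse (real (Suc k))"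
    by metis
  have tk0: "tk k \<ge> 0" for k using tk(1)[of k] by simp

  have bnd: "norm (x i t) \<le> norm z0 + sqrt (V z0 0 / w i)" if t: "t \<ge> 0" for i t
  proof -
    have "w i * (norm (x i t - z0))\<^sup>2 \<le> V z0 0" using Vterm[of i t z0] vmono[OF z0 order.refl t] by simp
    then have "(norm (x i t - z0))\<^sup>2 \<le> V z0 0 / w i" using wpos[of i] by (simp add: field_simps)
    then have "norm (x i t - z0) \<le> sqrt (V z0 0 / w i)" using real_le_rsqrt by blast
    moreover have "norm (x i t) \<le> norm z0 + norm (x i t - z0)" using norm_triangle_sub[of "x i t" z0] by simp
    ultimately show ?thesis by simp
  qed
  define seq where "seq k = (\<chi> i. x i (tk k))" for k
  have "bounded (range seq)"
  proof -
    have "norm (seq k) \<le> (\<Sum>i\<in>UNIV. norm z0 + sqrt (V z0 0 / w i))" for k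
    proof -
      have "norm (seq k) \<le> (\<Sum>i\<in>UNIV. norm (seq k $ i))" unfolding norm_vec_def
        by (rule L2_set_le_sum) simp
      also have "\<dots> \<le> (\<Sum>i\<in>UNIV. norm z0 + sqrt (V z0 0 / w i))"
        unfolding seq_def using bnd tk0 by (intro sum_mono) simp
      finally show ?thesis .
    qed
    then show ?thesis unfolding bounded_iff by blast
  qed
  then obtain l r where r: "strict_mono r" and lim: "(seq \<circ> r) \<longlonglongrightarrow> l"
    using bounded_imp_convergent_subsequence by blast
  have limi: "(\<lambda>k. x i (tk (r k))) \<longlonglongrightarrow> l $ i" for i
    using tendsto_vec_nth[OF lim, of i] unfolding seq_def by (simp add: o_def)
  have hlim0: "(\<lambda>k. h (tk k)) \<longlonglongrightarrow> 0"
  proof (rule real_tendsto_sandwich[where f="\<lambda>k. 0" and h="\<lambda>k. inverse (real (Suc k))"])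
    show "\<forall>\<^sub>F k in sequentially. 0 \<le> h (tk k)" by (intro always_eventually allI h0)
    show "\<forall>\<^sub>F k in sequentially. h (tk k) \<le> inverse (real (Suc k))"
      by (intro always_eventually allI less_imp_le tk(2))
    show "(\<lambda>k. 0) \<longlonglongrightarrow> (0::real)" by (rule tendsto_const)
    show "(\<lambda>k. inverse (real (Suc k))) \<longlonglongrightarrow> 0" by (rule LIMSEQ_inverse_real_of_nat)
  qed
  have hlim: "(\<lambda>k. h (tk (r k))) \<longlonglongrightarrow> 0"
    using LIMSEQ_subseq_LIMSEQ[OF hlim0 r] by (simp add: o_def)
  have le_lim: "L \<le> 0" if nn: "\<And>t. q t \<le> h t" and ql: "(\<lambda>k. q (tk (r k))) \<longlonglongrightarrow> L" for q L
    by (rule tendsto_le[OF _ hlim ql]) (use nn in auto)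
  have edge: "l $ j = l $ i" if a: "A i j > 0" for i j
  proof -
    have "w i * A i j * (norm (x j t - x i t))\<^sup>2 \<le> h t" for t
    proof -
      have "w i * A i j * (norm (x j t - x i t))\<^sup>2
          \<le> (\<Sum>j\<in>UNIV. w i * A i j * (norm (x j t - x i t))\<^sup>2)"
        by (rule member_le_sum[where f="\<lambda>j. w i * A i j * (norm (x j t - x i t))\<^sup>2"])
           (simp_all add: less_imp_le[OF wpos] A_nonneg)
      also have "\<dots> \<le> (\<Sum>i\<in>UNIV. \<Sum>j\<in>UNIV. w i * A i j * (norm (x j t - x i t))\<^sup>2)"
        by (rule member_le_sum[where f="\<lambda>i. \<Sum>j\<in>UNIV. w i * A i j * (norm (x j t - x i t))\<^sup>2"])
           (simp_all add: less_imp_le[OF wpos] A_nonneg sum_nonneg)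
      also have "\<dots> \<le> h t" unfolding h_def using tau_pos wpos f0
        by (simp add: sum_nonneg less_imp_le)
      finally show ?thesis .
    qed
    moreover have "(\<lambda>k. w i * A i j * (norm (x j (tk (r k)) - x i (tk (r k))))\<^sup>2)
        \<longlonglongrightarrow> w i * A i j * (norm (l $ j - l $ i))\<^sup>2"
      by (intro tendsto_intros limi)
    ultimately have "w i * A i j * (norm (l $ j - l $ i))\<^sup>2 \<le> 0" by (rule le_lim)
    then have "(norm (l $ j - l $ i))\<^sup>2 \<le> 0" using wpos[of i] a
      by (simp add: mult_le_0_iff zero_less_mult_iff)
    then show ?thesis by simp
  qed
  obtain i0 :: 'n where True by blast
  define xs where "xs = l $ i0"
  have lall: "l $ i = xs" for i
    unfolding xs_def by (rule sc_propagate[OF strong, where Q="\<lambda>k. l $ k = l $ i0"]) (use edge in auto)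
  have fcont: "isCont (f i) u" for i u
  proof -
    have "isCont (g i) u" using g_cont continuous_on_eq_continuous_at[OF open_UNIV] by blast
    moreover have "isCont (closest_point (X i)) u"
      by (rule continuous_at_closest_point[OF X_convex X_closed Xne])
    ultimately show ?thesis unfolding f_def pos_part_fun_def by (intro continuous_intros)
  qed
  have fzero: "f i xs = 0" for i
  proof -
    have "2 * \<tau> * (w i * f i t') \<le> h t" if "t' = x i t" for t t'
    proof -
      have "w i * f i (x i t) \<le> (\<Sum>i\<in>UNIV. w i * f i (x i t))"
        by (rule member_le_sum[where f="\<lambda>i. w i * f i (x i t)"]) (simp_all add: less_imp_le[OF wpos] f0)
      then have "2 * \<tau> * (w i * f i (x i t)) \<le> 2 * \<tau> * (\<Sum>i\<in>UNIV. w i * f i (x i t))"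
        using tau_pos by simp
      moreover have "0 \<le> (\<Sum>i\<in>UNIV. \<Sum>j\<in>UNIV. w i * A i j * (norm (x j t - x i t))\<^sup>2)"
        by (simp add: sum_nonneg less_imp_le[OF wpos] A_nonneg)
      ultimately show ?thesis unfolding h_def that by simp
    qed
    moreover have "(\<lambda>k. 2 * \<tau> * (w i * f i (x i (tk (r k))))) \<longlonglongrightarrow> 2 * \<tau> * (w i * f i (l $ i))"
      by (intro tendsto_intros isCont_tendsto_compose[OF fcont] limi)
    ultimately have "2 * \<tau> * (w i * f i (l $ i)) \<le> 0"
      by (intro le_lim[where q="\<lambda>t. 2 * \<tau> * (w i * f i (x i t))"]) auto
    then have "f i (l $ i) \<le> 0" using tau_pos wpos[of i] by (simp add: mult_le_0_iff zero_less_mult_iff)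
    then show ?thesis using f0[of i xs] lall[of i] by simp
  qed
  have xs_sol: "xs \<in> cfp_solutions g X"
  proof -
    have "xs \<in> X i \<and> g i xs \<le> 0" for i
    proof -
      have a: "(norm (xs - closest_point (X i) xs))\<^sup>2 + pos_part_fun (g i) xs = 0"
        using fzero[of i] unfolding f_def .
      have b: "pos_part_fun (g i) xs \<ge> 0" unfolding pos_part_fun_def by simp
      have "(norm (xs - closest_point (X i) xs))\<^sup>2 = 0" and c: "pos_part_fun (g i) xs = 0"
        using a b by (smt (verit) zero_le_power2)+
      then have "xs = closest_point (X i) xs" by simp
      then have "xs \<in> X i" using closest_point_in_set[OF X_closed Xne, of i xs] by simp
      moreover have "g i xs \<le> 0" using c unfolding pos_part_fun_def by simp
      ultimately show ?thesis by blast
    qed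
    then show ?thesis unfolding cfp_solutions_def by blast
  qed
  have Vlim: "(\<lambda>k. V xs (tk (r k))) \<longlonglongrightarrow> 0"
  proof -
    have "(\<lambda>k. V xs (tk (r k))) \<longlonglongrightarrow> (\<Sum>i\<in>UNIV. w i * inner (l $ i - xs) (l $ i - xs))"
      unfolding V_def by (intro tendsto_intros limi)
    then show ?thesis using lall by simp
  qed
  have Vev: "\<exists>T. \<forall>t\<ge>T. V xs t < e" if e: "e > 0" for e
  proof -
    have "\<forall>\<^sub>F k in sequentially. V xs (tk (r k)) < e" using order_tendstoD(2)[OF Vlim e] .
    then obtain k where k: "V xs (tk (r k)) < e" by (auto simp: eventually_sequentially)
    show ?thesis
      by (rule exI[of _ "tk (r k)"]) (use vmono[OF xs_sol tk0] k in \<open>auto intro: le_less_trans\<close>)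
  qed
  have conv: "(x i \<longlongrightarrow> xs) at_top" for i
  proof (rule tendstoI)
    fix e :: real assume e: "e > 0"
    obtain T where T: "\<And>t. t \<ge> T \<Longrightarrow> V xs t < w i * e\<^sup>2"
      using Vev[of "w i * e\<^sup>2"] wpos[of i] e by auto
    show "\<forall>\<^sub>F t in at_top. dist (x i t) xs < e"
      unfolding eventually_at_top_linorder
    proof (intro exI allI impI)
      fix t assume "t \<ge> T"
      then have "w i * (norm (x i t - xs))\<^sup>2 < w i * e\<^sup>2" using Vterm[of i t xs] T by (meson le_less_trans)
      then have "(norm (x i t - xs))\<^sup>2 < e\<^sup>2" using wpos[of i] by simp
      then have "norm (x i t - xs) < e" using e by (simp add: power_less_imp_less_base)
      then show "dist (x i t) xs < e" by (simp add: dist_norm)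
    qed
  qed
  have cons: "((\<lambda>t. norm (x i t - x j t)) \<longlongrightarrow> 0) at_top" for i j
  proof -
    have "((\<lambda>t. norm (x i t - x j t)) \<longlongrightarrow> norm (xs - xs)) at_top"
      by (intro tendsto_intros conv)
    then show ?thesis by simp
  qed
  show ?thesis using cons conv xs_sol by blast
qed

end
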